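(* Let $n\ge1$ and let $f$ be a function from the set of Schubert problems for $GL_n$ (triples $(u,v,w)\in S_n^3$ with $l(u)+l(v)+l(w)=\binom n2$) to $\mathbb Z$ satisfying: (1) (descent-cycling invariance) for every triple $(u,v,w)\in S_n^3$ with $l(u)+l(v)+l(w)=\binom n2-1$ and every $i\in\{1,\dots,n-1\}$ with $u(i)<u(i+1)$, $v(i)<v(i+1)$, $w(i)<w(i+1)$, one has $f(us_i,v,w)=f(u,vs_i,w)=f(u,v,ws_i)$; (2) $f(u,v,w)=0$ whenever there is $i$ with $u(i)<u(i+1)$, $v(i)<v(i+1)$ and $w(i)<w(i+1)$; (3) $f(\mathrm{id},\mathrm{id},w_0)=1$. Let $\pi,\sigma\in S_n$ with $l(\pi)+l(\sigma)=\binom n2$. Then $f(\pi,\mathrm{id},\sigma)=1$ if $\pi(m)=n+1-\sigma(m)$ for all $m$ (i.e. $\pi=w_0\sigma$), and $f(\pi,\mathrm{id},\sigma)=0$ otherwise.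
   Context: Permutations are in one-line notation; $l$ is the number of inversions; $w_0=n\,n{-}1\cdots1$ is the longest permutation; $\mathrm{id}$ is the identity; $us_i$ denotes $u$ with the entries in positions $i$ and $i+1$ swapped. *)

theory Defs
  imports "HOL-Combinatorics.Combinatorics"
begin

text \<open>Permutations of S_n are functions nat => nat permuting {1..n} (one-line notation u(1)...u(n)).\<close>

definition inv_len :: "nat \<Rightarrow> (nat \<Rightarrow> nat) \<Rightarrow> nat" where
  "inv_len n u = card {(i, j). 1 \<le> i \<and> i < j \<and> j \<le> n \<and> u j < u i}"

definition w0 :: "nat \<Rightarrow> nat \<Rightarrow> nat" where
  "w0 n = (\<lambda>m. if 1 \<le> m \<and> m \<le> n then n + 1 - m else m)"

definition rs :: "(nat \<Rightarrow> nat) \<Rightarrow> nat \<Rightarrow> nat \<Rightarrow> nat" where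
  "rs u i = u \<circ> Transposition.transpose i (i + 1)"

definition schubert_problem :: "nat \<Rightarrow> (nat \<Rightarrow> nat) \<Rightarrow> (nat \<Rightarrow> nat) \<Rightarrow> (nat \<Rightarrow> nat) \<Rightarrow> bool" where
  "schubert_problem n u v w \<longleftrightarrow> u permutes {1..n} \<and> v permutes {1..n} \<and> w permutes {1..n}
     \<and> inv_len n u + inv_len n v + inv_len n w = n choose 2"

end

theory Submission
  imports Defs
begin

lemma inv_len_rs:
  assumes "u i < u (i+1)" "1 \<le> i" "i+1 \<le> n"
  shows "inv_len n (rs u i) = Suc (inv_len n u)"
proof -
  define t where "t = Transposition.transpose i (i+1)"
  define A where "A = {(a, b). 1 \<le> a \<and> a < b \<and> b \<le> n \<and> u b < u a}"
  define B where "B = {(a, b). 1 \<le> a \<and> a < b \<and> b \<le> n \<and> (u \<circ> t) b < (u \<circ> t) a}"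
  define h where "h = (\<lambda>(a::nat,b::nat). (t a, t b))"
  have fA: "finite A" unfolding A_def
    by (rule finite_subset[of _ "{1..n} \<times> {1..n}"]) auto
  have inj: "inj h" unfolding h_def inj_def t_def by (auto simp: transpose_eq_iff)
  have tt: "\<And>x. t (t x) = x" unfolding t_def by simp
  have lt: "\<And>a b. a < b \<Longrightarrow> (a, b) \<noteq> (i, i+1) \<Longrightarrow> t a < t b"
    unfolding t_def transpose_def by auto
  have rng: "\<And>a. 1 \<le> a \<Longrightarrow> a \<le> n \<Longrightarrow> 1 \<le> t a \<and> t a \<le> n"
    unfolding t_def transpose_def using assms by auto
  have "B = insert (i, i+1) (h ` A)"
  proof (intro equalityI subsetI)
    fix p assume p: "p \<in> B"
    obtain a b where ab: "p = (a,b)" by force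
    show "p \<in> insert (i, i+1) (h ` A)"
    proof (cases "p = (i, i+1)")
      case False
      have "(t a, t b) \<in> A" using p ab False lt[of a b] rng[of a] rng[of b]
        unfolding A_def B_def by auto
      moreover have "h (t a, t b) = p" using ab tt unfolding h_def by simp
      ultimately show ?thesis by force
    qed simp
  next
    fix p assume "p \<in> insert (i, i+1) (h ` A)"
    then show "p \<in> B"
    proof
      assume "p = (i, i+1)" then show ?thesis using assms unfolding B_def t_def by auto
    next
      assume "p \<in> h ` A"
      then obtain a b where ab: "(a,b) \<in> A" "p = (t a, t b)" unfolding h_def by auto
      have ne: "(a,b) \<noteq> (i,i+1)" using ab assms unfolding A_def by auto
      show ?thesis using ab lt[OF _ ne] rng[of a] rng[of b] tt unfolding A_def B_def by auto
    qed
  qed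
  moreover have "(i, i+1) \<notin> h ` A"
  proof
    assume "(i, i+1) \<in> h ` A"
    then obtain a b where "(a,b) \<in> A" "t a = i" "t b = i+1" unfolding h_def by auto
    then have "a = i+1" "b = i" using tt unfolding t_def by (metis transpose_apply_first transpose_apply_second)+
    with \<open>(a,b) \<in> A\<close> show False unfolding A_def by auto
  qed
  ultimately have "card B = Suc (card A)"
    using fA inj by (simp add: card_image inj_on_subset[OF inj])
  then show ?thesis unfolding inv_len_def rs_def A_def B_def t_def by simp
qed

lemma card_pairs: "card {(i, j). 1 \<le> i \<and> i < j \<and> j \<le> (n::nat)} = n choose 2"
proof (induction n)
  case 0
  have "{(i, j). 1 \<le> i \<and> i < j \<and> j \<le> (0::nat)} = {}" by auto
  then show ?case unfolding \<open>_ = {}\<close> by simp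
next
  case (Suc n)
  have eq: "{(i, j). 1 \<le> i \<and> i < j \<and> j \<le> Suc n} =
     {(i, j). 1 \<le> i \<and> i < j \<and> j \<le> n} \<union> (\<lambda>i. (i, Suc n)) ` {1..n}" by auto
  have f: "finite {(i, j). 1 \<le> i \<and> i < j \<and> j \<le> (n::nat)}"
    by (rule finite_subset[of _ "{1..n} \<times> {1..n}"]) auto
  have "card ({(i, j). 1 \<le> i \<and> i < j \<and> j \<le> n} \<union> (\<lambda>i. (i, Suc n)) ` {1..n})
     = card {(i, j). 1 \<le> i \<and> i < j \<and> j \<le> n} + card ((\<lambda>i. (i, Suc n)) ` {1..n})"
    by (rule card_Un_disjoint) (use f in auto)
  also have "card ((\<lambda>i. (i, Suc n)) ` {1..n}) = n" by (simp add: card_image inj_on_def)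
  moreover have "Suc n choose 2 = (n choose 2) + n" by (simp add: numeral_2_eq_2)
  ultimately show ?case using Suc eq by simp
qed

lemma incr_id:
  fixes g :: "nat \<Rightarrow> nat"
  assumes "\<And>k. 1 \<le> k \<Longrightarrow> k < n \<Longrightarrow> g k < g (k+1)"
    and "\<And>k. 1 \<le> k \<Longrightarrow> k \<le> n \<Longrightarrow> 1 \<le> g k \<and> g k \<le> n"
    and "1 \<le> m" "m \<le> n"
  shows "g m = m"
proof -
  have gr: "g k + (j - k) \<le> g j" if "1 \<le> k" "k \<le> j" "j \<le> n" for k j
    using that
  proof (induction j)
    case 0 then show ?case by simp
  next
    case (Suc j)
    show ?case
    proof (cases "k = Suc j")
      case False
      then have "g k + (j - k) \<le> g j" using Suc by auto
      moreover have "g j < g (Suc j)" using assms(1)[of j] Suc False by auto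
      ultimately show ?thesis using Suc False by auto
    qed simp
  qed
  have "g 1 + (m - 1) \<le> g m" using gr[of 1 m] assms by auto
  moreover have "g m + (n - m) \<le> g n" using gr[of m n] assms by auto
  moreover have "1 \<le> g 1" "g n \<le> n" using assms(2)[of 1] assms(2)[of n] assms by auto
  ultimately show ?thesis by linarith
qed

lemma inv_len_id: "inv_len n id = 0"
proof -
  have "{(i, j). 1 \<le> i \<and> i < j \<and> j \<le> n \<and> id j < id i} = {}" by auto
  then show ?thesis unfolding inv_len_def by (simp only: card.empty)
qed

lemma rs_rs: "rs (rs u i) i = u"
  unfolding rs_def by (simp add: comp_assoc)

lemma rs_permutes: "u permutes {1..n} \<Longrightarrow> 1 \<le> i \<Longrightarrow> i + 1 \<le> n \<Longrightarrow> rs u i permutes {1..n}"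
  unfolding rs_def by (intro permutes_compose permutes_swap_id) auto

theorem lemma4:
  fixes n :: nat and f :: "(nat \<Rightarrow> nat) \<Rightarrow> (nat \<Rightarrow> nat) \<Rightarrow> (nat \<Rightarrow> nat) \<Rightarrow> int"
  assumes n1: "n \<ge> 1"
    and cyc: "\<And>u v w i. u permutes {1..n} \<Longrightarrow> v permutes {1..n} \<Longrightarrow> w permutes {1..n} \<Longrightarrow>
         inv_len n u + inv_len n v + inv_len n w + 1 = n choose 2 \<Longrightarrow>
         1 \<le> i \<Longrightarrow> i \<le> n - 1 \<Longrightarrow> u i < u (i + 1) \<Longrightarrow> v i < v (i + 1) \<Longrightarrow> w i < w (i + 1) \<Longrightarrow>
         f (rs u i) v w = f u (rs v i) w \<and> f u (rs v i) w = f u v (rs w i)"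
    and van: "\<And>u v w i. schubert_problem n u v w \<Longrightarrow>
         1 \<le> i \<Longrightarrow> i \<le> n - 1 \<Longrightarrow> u i < u (i + 1) \<Longrightarrow> v i < v (i + 1) \<Longrightarrow> w i < w (i + 1) \<Longrightarrow>
         f u v w = 0"
    and norm: "f id id (w0 n) = 1"
    and pi: "\<pi> permutes {1..n}" and sigma: "\<sigma> permutes {1..n}"
    and len: "inv_len n \<pi> + inv_len n \<sigma> = n choose 2"
  shows "f \<pi> id \<sigma> = (if (\<forall>m\<in>{1..n}. \<pi> m = n + 1 - \<sigma> m) then 1 else 0)"
proof -
  have main: "\<And>p s. inv_len n p = k \<Longrightarrow> p permutes {1..n} \<Longrightarrow> s permutes {1..n} \<Longrightarrow>
     inv_len n p + inv_len n s = n choose 2 \<Longrightarrow>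
     f p id s = (if (\<forall>m\<in>{1..n}. p m = n + 1 - s m) then 1 else 0)" for k
  proof (induction k rule: less_induct)
    case (less k p s)
    note P = less.prems(2) and S = less.prems(3) and L = less.prems(4)
    have injp: "inj p" using P permutes_inj by blast
    have injs: "inj s" using S permutes_inj by blast
    have sr: "1 \<le> s m \<and> s m \<le> n" if "1 \<le> m" "m \<le> n" for m
      using permutes_in_image[OF S, of m] that by auto
    have pr: "1 \<le> p m \<and> p m \<le> n" if "1 \<le> m" "m \<le> n" for m
      using permutes_in_image[OF P, of m] that by auto
    show ?case
    proof (cases "\<exists>j. 1 \<le> j \<and> j \<le> n - 1 \<and> p j < p (j+1) \<and> s j < s (j+1)")
      case True
      then obtain j where j: "1 \<le> j" "j \<le> n - 1" "p j < p (j+1)" "s j < s (j+1)" by blast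
      have "f p id s = 0"
        by (rule van[OF _ j(1,2,3) _ j(4)]) (use P S L in \<open>auto simp: schubert_problem_def inv_len_id permutes_id\<close>)
      moreover have "\<not> (\<forall>m\<in>{1..n}. p m = n + 1 - s m)"
      proof
        assume a: "\<forall>m\<in>{1..n}. p m = n + 1 - s m"
        have "p j = n + 1 - s j" "p (j+1) = n + 1 - s (j+1)" using a j by auto
        moreover have "s (j+1) \<le> n" using sr[of "j+1"] j by auto
        ultimately show False using j by linarith
      qed
      ultimately show ?thesis by (simp only: if_False)
    next
      case notA: False
      show ?thesis
      proof (cases "\<exists>i. 1 \<le> i \<and> i \<le> n - 1 \<and> p i > p (i+1) \<and> s i < s (i+1)")
        case True
        then obtain i where i: "1 \<le> i" "i \<le> n - 1" "p i > p (i+1)" "s i < s (i+1)" by blast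
        define u where "u = rs p i"
        have ui: "u i < u (i+1)" using i unfolding u_def rs_def by simp
        have up: "u permutes {1..n}" unfolding u_def using rs_permutes[OF P] i by auto
        have lu: "inv_len n p = Suc (inv_len n u)"
          using inv_len_rs[OF ui] i rs_rs[of p i] unfolding u_def by auto
        have ls: "inv_len n (rs s i) = Suc (inv_len n s)" using inv_len_rs[of s i n] i by auto
        have sp: "rs s i permutes {1..n}" using rs_permutes[OF S] i by auto
        have c: "f (rs u i) id s = f u (rs id i) s \<and> f u (rs id i) s = f u id (rs s i)"
          by (rule cyc[OF up permutes_id S _ i(1,2) ui _ i(4)]) (use L lu in \<open>auto simp: inv_len_id\<close>)
        have "f p id s = f u id (rs s i)" using c rs_rs[of p i] unfolding u_def by simp
        also have "\<dots> = (if (\<forall>m\<in>{1..n}. u m = n + 1 - rs s i m) then 1 else 0)"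
          by (rule less.IH[OF _ refl up sp]) (use less.prems(1) lu ls L in auto)
        also have "(\<forall>m\<in>{1..n}. u m = n + 1 - rs s i m) \<longleftrightarrow> (\<forall>m\<in>{1..n}. p m = n + 1 - s m)"
        proof -
          define t where "t = Transposition.transpose i (i+1)"
          have tp: "t permutes {1..n}" unfolding t_def using i by (intro permutes_swap_id) auto
          have "(\<forall>m\<in>{1..n}. u m = n + 1 - rs s i m) \<longleftrightarrow> (\<forall>m\<in>{1..n}. p (t m) = n + 1 - s (t m))"
            unfolding u_def rs_def t_def by simp
          also have "\<dots> \<longleftrightarrow> (\<forall>m\<in>t ` {1..n}. p m = n + 1 - s m)" by simp
          also have "t ` {1..n} = {1..n}" using tp permutes_image by blast
          finally show ?thesis .
        qed
        finally show ?thesis .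
      next
        case notB: False
        have sd: "s (j+1) < s j" if "1 \<le> j" "j < n" for j
        proof -
          have "s j \<noteq> s (j+1)" "p j \<noteq> p (j+1)" using inj_eq[OF injs, of j "j+1"] inj_eq[OF injp, of j "j+1"] by simp_all
          moreover have "\<not> (p j < p (j+1) \<and> s j < s (j+1))" using notA that by auto
          moreover have "\<not> (p j > p (j+1) \<and> s j < s (j+1))" using notB that by auto
          ultimately show ?thesis by linarith
        qed
        have sv: "s m = n + 1 - m" if "1 \<le> m" "m \<le> n" for m
        proof -
          have "(\<lambda>m. n + 1 - s m) m = m"
          proof (rule incr_id[of n])
            fix k assume k: "1 \<le> k" "k < n"
            then have "s (k+1) < s k" "s k \<le> n" using sd sr by auto
            then show "n + 1 - s k < n + 1 - s (k+1)" by arith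
          next
            fix k assume k: "1 \<le> k" "k \<le> n"
            then have "1 \<le> s k" "s k \<le> n" using sr by auto
            then show "1 \<le> n + 1 - s k \<and> n + 1 - s k \<le> n" by arith
          qed (use that in auto)
          then show ?thesis using sr[OF that] by arith
        qed
        have "inv_len n s = n choose 2"
        proof -
          have "{(i, j). 1 \<le> i \<and> i < j \<and> j \<le> n \<and> s j < s i} = {(i, j). 1 \<le> i \<and> i < j \<and> j \<le> n}"
            using sv by auto
          then show ?thesis unfolding inv_len_def using card_pairs by simp
        qed
        then have lp0: "inv_len n p = 0" using L by simp
        have pa: "p j < p (j+1)" if "1 \<le> j" "j < n" for j
        proof -
          have fin: "finite {(i, j). 1 \<le> i \<and> i < j \<and> j \<le> n \<and> p j < p i}"
            by (rule finite_subset[of _ "{1..n} \<times> {1..n}"]) auto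
          have "p j \<noteq> p (j+1)" using inj_eq[OF injp, of j "j+1"] by simp
          moreover have "\<not> p (j+1) < p j"
          proof
            assume "p (j+1) < p j"
            then have "(j, j+1) \<in> {(i, j). 1 \<le> i \<and> i < j \<and> j \<le> n \<and> p j < p i}" using that by auto
            then show False using lp0 fin unfolding inv_len_def by auto
          qed
          ultimately show ?thesis by auto
        qed
        have pv: "p m = m" if "1 \<le> m" "m \<le> n" for m
          by (rule incr_id[of n]) (use pa pr that in auto)
        have pid: "p = id"
        proof
          fix m show "p m = id m"
            using pv permutes_not_in[OF P, of m] by (cases "1 \<le> m \<and> m \<le> n") auto
        qed
        have sw: "s = w0 n"
        proof
          fix m show "s m = w0 n m"
            using sv permutes_not_in[OF S, of m] unfolding w0_def by (cases "1 \<le> m \<and> m \<le> n") auto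
        qed
        have c: "\<forall>m\<in>{1..n}. p m = n + 1 - s m" using sv pv by auto
        have "f p id s = 1" using norm pid sw by simp
        then show ?thesis by (simp only: if_P[OF c])
      qed
    qed
  qed
  show ?thesis by (rule main[OF refl pi sigma len])
qed

end
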